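(* Let $q$ be a self-join-free Boolean conjunctive query, let $q_0\subseteq q$, let $\mathbf{db}$ be a database, and let $\mathbf{o}$ be a garbage set for $q_0$ in $\mathbf{db}$. Then every repair of $\mathbf{db}$ satisfies $q$ if and only if every repair of $\mathbf{db}\setminus\mathbf{o}$ satisfies $q$.
   Context: Every relation name has a signature $[n,k]$ ($1\le k\le n$; primary-key positions $1,\dots,k$) and a mode in $\{\mathsf{c},\mathsf{i}\}$. Facts are variable-free atoms; facts are key-equal if same relation name and same primary-key values. A database is a finite set of facts with no two distinct key-equal facts of mode $\mathsf{c}$, all of whose relation names occur in $q$. The block of a fact $A$ in $\mathbf{db}$ is the set of facts of $\mathbf{db}$ key-equal to $A$. A repair of a set of facts is a maximal subset without two distinct key-equal facts. A self-join-free Boolean conjunctive query is a finite set of atoms with distinct relation names, satisfied by a set of facts $\mathbf{s}$ iff some valuation $\theta$ of its variables has $\theta(q)\subseteq\mathbf{s}$; for a fact $A$, $\mathrm{atom}(A)$ is the atom of $q$ with the same relation name. A subset $\mathbf{o}\subseteq\mathbf{db}$ is a garbage set for $q_0$ in $\mathbf{db}$ if (1) for every $A\in\mathbf{o}$, $\mathrm{atom}(A)\in q_0$ and the block of $A$ in $\mathbf{db}$ is included in $\mathbf{o}$; and (2) there is a repair $\mathbf{r}$ of $\mathbf{o}$ such that for every valuation $\theta$ of the variables of $q$, if $\theta(q)\subseteq(\mathbf{db}\setminus\mathbf{o})\cup\mathbf{r}$ then $\theta(q_0)\cap\mathbf{r}=\emptyset$. *)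

theory Defs
  imports Main
begin

datatype mode = ModeC | ModeI

datatype ('v, 'c) qterm = Var 'v | Const 'c

type_synonym ('r, 'c) fact = "'r \<times> 'c list"
type_synonym ('r, 'v, 'c) atom = "'r \<times> ('v, 'c) qterm list"

(* A schema assigns to every relation name a signature [n,k] (as a pair (n,k))
   and a mode. *)
definition schema_ok :: "('r \<Rightarrow> nat \<times> nat) \<Rightarrow> bool" where
  "schema_ok sig \<longleftrightarrow> (\<forall>R. 1 \<le> snd (sig R) \<and> snd (sig R) \<le> fst (sig R))"

definition key_equal :: "('r \<Rightarrow> nat \<times> nat) \<Rightarrow> ('r, 'c) fact \<Rightarrow> ('r, 'c) fact \<Rightarrow> bool" where
  "key_equal sig A B \<longleftrightarrow> fst A = fst B \<and>
      take (snd (sig (fst A))) (snd A) = take (snd (sig (fst B))) (snd B)"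

definition fact_wf :: "('r \<Rightarrow> nat \<times> nat) \<Rightarrow> ('r, 'c) fact \<Rightarrow> bool" where
  "fact_wf sig A \<longleftrightarrow> length (snd A) = fst (sig (fst A))"

definition atom_wf :: "('r \<Rightarrow> nat \<times> nat) \<Rightarrow> ('r, 'v, 'c) atom \<Rightarrow> bool" where
  "atom_wf sig a \<longleftrightarrow> length (snd a) = fst (sig (fst a))"

definition sjf_bcq :: "('r \<Rightarrow> nat \<times> nat) \<Rightarrow> ('r, 'v, 'c) atom set \<Rightarrow> bool" where
  "sjf_bcq sig q \<longleftrightarrow> finite q \<and> (\<forall>a\<in>q. atom_wf sig a) \<and>
      (\<forall>a\<in>q. \<forall>b\<in>q. fst a = fst b \<longrightarrow> a = b)"

definition is_database :: "('r \<Rightarrow> nat \<times> nat) \<Rightarrow> ('r \<Rightarrow> mode) \<Rightarrow> ('r, 'v, 'c) atom set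
    \<Rightarrow> ('r, 'c) fact set \<Rightarrow> bool" where
  "is_database sig md q db \<longleftrightarrow> finite db \<and> (\<forall>A\<in>db. fact_wf sig A) \<and>
      (\<forall>A\<in>db. \<forall>B\<in>db. key_equal sig A B \<and> A \<noteq> B \<longrightarrow> md (fst A) \<noteq> ModeC) \<and>
      (\<forall>A\<in>db. \<exists>a\<in>q. fst a = fst A)"

definition block :: "('r \<Rightarrow> nat \<times> nat) \<Rightarrow> ('r, 'c) fact set \<Rightarrow> ('r, 'c) fact \<Rightarrow> ('r, 'c) fact set" where
  "block sig db A = {B \<in> db. key_equal sig A B}"

definition consistent :: "('r \<Rightarrow> nat \<times> nat) \<Rightarrow> ('r, 'c) fact set \<Rightarrow> bool" where
  "consistent sig s \<longleftrightarrow> (\<forall>A\<in>s. \<forall>B\<in>s. key_equal sig A B \<longrightarrow> A = B)"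

definition is_repair :: "('r \<Rightarrow> nat \<times> nat) \<Rightarrow> ('r, 'c) fact set \<Rightarrow> ('r, 'c) fact set \<Rightarrow> bool" where
  "is_repair sig s r \<longleftrightarrow> r \<subseteq> s \<and> consistent sig r \<and>
      (\<forall>r'. r \<subseteq> r' \<and> r' \<subseteq> s \<and> consistent sig r' \<longrightarrow> r' = r)"

fun term_val :: "('v \<Rightarrow> 'c) \<Rightarrow> ('v, 'c) qterm \<Rightarrow> 'c" where
  "term_val \<theta> (Var x) = \<theta> x"
| "term_val \<theta> (Const c) = c"

definition atom_val :: "('v \<Rightarrow> 'c) \<Rightarrow> ('r, 'v, 'c) atom \<Rightarrow> ('r, 'c) fact" where
  "atom_val \<theta> a = (fst a, map (term_val \<theta>) (snd a))"

definition query_val :: "('v \<Rightarrow> 'c) \<Rightarrow> ('r, 'v, 'c) atom set \<Rightarrow> ('r, 'c) fact set" where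
  "query_val \<theta> q = atom_val \<theta> ` q"

definition satisfies :: "('r, 'c) fact set \<Rightarrow> ('r, 'v, 'c) atom set \<Rightarrow> bool" where
  "satisfies s q \<longleftrightarrow> (\<exists>\<theta>. query_val \<theta> q \<subseteq> s)"

definition atom_of :: "('r, 'v, 'c) atom set \<Rightarrow> ('r, 'c) fact \<Rightarrow> ('r, 'v, 'c) atom" where
  "atom_of q A = (THE a. a \<in> q \<and> fst a = fst A)"

definition garbage_set :: "('r \<Rightarrow> nat \<times> nat) \<Rightarrow> ('r, 'v, 'c) atom set \<Rightarrow> ('r, 'v, 'c) atom set
    \<Rightarrow> ('r, 'c) fact set \<Rightarrow> ('r, 'c) fact set \<Rightarrow> bool" where
  "garbage_set sig q q0 db gs \<longleftrightarrow> gs \<subseteq> db \<and>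
      (\<forall>A\<in>gs. atom_of q A \<in> q0 \<and> block sig db A \<subseteq> gs) \<and>
      (\<exists>r. is_repair sig gs r \<and>
         (\<forall>\<theta>. query_val \<theta> q \<subseteq> (db - gs) \<union> r \<longrightarrow> query_val \<theta> q0 \<inter> r = {}))"

end

theory Submission
  imports Defs
begin

lemma ke_sym: "key_equal sig A B \<Longrightarrow> key_equal sig B A"
  unfolding key_equal_def by auto

lemma cross:
  assumes "\<forall>A\<in>gs. block sig db A \<subseteq> gs" "A \<in> gs" "B \<in> db" "key_equal sig A B"
  shows "B \<in> gs"
  using assms unfolding block_def by auto

lemma restrict_repair:
  assumes blk: "\<forall>A\<in>gs. block sig db A \<subseteq> gs" and sub: "gs \<subseteq> db"
    and r: "is_repair sig db r"
  shows "is_repair sig (db - gs) (r \<inter> (db - gs))"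
proof -
  have rs: "r \<subseteq> db" "consistent sig r" and mx: "\<And>r'. r \<subseteq> r' \<Longrightarrow> r' \<subseteq> db \<Longrightarrow> consistent sig r' \<Longrightarrow> r' = r"
    using r unfolding is_repair_def by auto
  show ?thesis unfolding is_repair_def
  proof (intro conjI allI impI)
    show "r \<inter> (db - gs) \<subseteq> db - gs" by auto
    show "consistent sig (r \<inter> (db - gs))" using rs(2) unfolding consistent_def by auto
    fix r' assume h: "r \<inter> (db - gs) \<subseteq> r' \<and> r' \<subseteq> db - gs \<and> consistent sig r'"
    have c: "consistent sig (r' \<union> (r \<inter> gs))"
      unfolding consistent_def
    proof (intro ballI impI)
      fix A B assume A: "A \<in> r' \<union> (r \<inter> gs)" and B: "B \<in> r' \<union> (r \<inter> gs)" and k: "key_equal sig A B"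
      show "A = B"
      proof (cases "A \<in> gs")
        case True
        then have "B \<in> gs" using cross[OF blk True _ k] B h rs(1) by auto
        then show ?thesis using A B True h rs(2) k unfolding consistent_def by auto
      next
        case False
        have "B \<notin> gs"
        proof
          assume "B \<in> gs"
          then have "A \<in> gs" using cross[OF blk _ _ ke_sym[OF k]] A h rs(1) by auto
          then show False using False by simp
        qed
        then show ?thesis using A B False h k unfolding consistent_def by auto
      qed
    qed
    have "r' \<union> (r \<inter> gs) = r"
      by (rule mx) (use h rs c in auto)
    then show "r' = r \<inter> (db - gs)" using h by auto
  qed
qed

lemma union_repair:
  assumes blk: "\<forall>A\<in>gs. block sig db A \<subseteq> gs" and sub: "gs \<subseteq> db"
    and r1: "is_repair sig (db - gs) r1" and r0: "is_repair sig gs r0"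
  shows "is_repair sig db (r1 \<union> r0)"
proof -
  have a1: "r1 \<subseteq> db - gs" "consistent sig r1"
    and m1: "\<And>r'. r1 \<subseteq> r' \<Longrightarrow> r' \<subseteq> db - gs \<Longrightarrow> consistent sig r' \<Longrightarrow> r' = r1"
    using r1 unfolding is_repair_def by auto
  have a0: "r0 \<subseteq> gs" "consistent sig r0"
    and m0: "\<And>r'. r0 \<subseteq> r' \<Longrightarrow> r' \<subseteq> gs \<Longrightarrow> consistent sig r' \<Longrightarrow> r' = r0"
    using r0 unfolding is_repair_def by auto
  show ?thesis unfolding is_repair_def
  proof (intro conjI allI impI)
    show "r1 \<union> r0 \<subseteq> db" using a1 a0 sub by auto
    show "consistent sig (r1 \<union> r0)"
      unfolding consistent_def
    proof (intro ballI impI)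
      fix A B assume A: "A \<in> r1 \<union> r0" and B: "B \<in> r1 \<union> r0" and k: "key_equal sig A B"
      show "A = B"
      proof (cases "A \<in> gs")
        case True
        then have "B \<in> gs" using cross[OF blk True _ k] B a1 a0 sub by auto
        then show ?thesis using A B True a1 a0 k unfolding consistent_def by auto
      next
        case False
        have "B \<notin> gs"
        proof
          assume "B \<in> gs"
          then have "A \<in> gs" using cross[OF blk _ _ ke_sym[OF k]] A a1 a0 sub by auto
          then show False using False by simp
        qed
        then show ?thesis using A B False a1 a0 k unfolding consistent_def by auto
      qed
    qed
    fix r' assume h: "r1 \<union> r0 \<subseteq> r' \<and> r' \<subseteq> db \<and> consistent sig r'"
    have e1: "r' \<inter> (db - gs) = r1"
      by (rule m1) (use h a1 in \<open>auto simp: consistent_def\<close>)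
    have e0: "r' \<inter> gs = r0"
      by (rule m0) (use h a0 in \<open>auto simp: consistent_def\<close>)
    show "r' = r1 \<union> r0" using e1 e0 h by auto
  qed
qed

theorem lemma16:
  fixes sig :: "'r \<Rightarrow> nat \<times> nat" and md :: "'r \<Rightarrow> mode"
    and q q0 :: "('r, 'v, 'c) atom set" and db gs :: "('r, 'c) fact set"
  assumes "schema_ok sig"
    and "sjf_bcq sig q"
    and "q0 \<subseteq> q"
    and "is_database sig md q db"
    and "garbage_set sig q q0 db gs"
  shows "(\<forall>r. is_repair sig db r \<longrightarrow> satisfies r q) \<longleftrightarrow>
         (\<forall>r. is_repair sig (db - gs) r \<longrightarrow> satisfies r q)"
proof -
  have sub: "gs \<subseteq> db" and blk: "\<forall>A\<in>gs. block sig db A \<subseteq> gs"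
    and q0g: "\<forall>A\<in>gs. atom_of q A \<in> q0"
    using assms(5) unfolding garbage_set_def by auto
  obtain r0 where r0: "is_repair sig gs r0"
    and r0p: "\<And>\<theta>. query_val \<theta> q \<subseteq> (db - gs) \<union> r0 \<Longrightarrow> query_val \<theta> q0 \<inter> r0 = {}"
    using assms(5) unfolding garbage_set_def by blast
  have r0g: "r0 \<subseteq> gs" using r0 unfolding is_repair_def by auto
  have uniq: "\<And>a b. a \<in> q \<Longrightarrow> b \<in> q \<Longrightarrow> fst a = fst b \<Longrightarrow> a = b"
    using assms(2) unfolding sjf_bcq_def by blast
  show ?thesis
  proof
    assume H: "\<forall>r. is_repair sig db r \<longrightarrow> satisfies r q"
    show "\<forall>r. is_repair sig (db - gs) r \<longrightarrow> satisfies r q"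
    proof (intro allI impI)
      fix r1 assume r1: "is_repair sig (db - gs) r1"
      have r1s: "r1 \<subseteq> db - gs" using r1 unfolding is_repair_def by auto
      have "satisfies (r1 \<union> r0) q" using H union_repair[OF blk sub r1 r0] by blast
      then obtain \<theta> where th: "query_val \<theta> q \<subseteq> r1 \<union> r0" unfolding satisfies_def by blast
      then have "query_val \<theta> q \<subseteq> (db - gs) \<union> r0" using r1s by auto
      then have dis: "query_val \<theta> q0 \<inter> r0 = {}" by (rule r0p)
      have "query_val \<theta> q \<subseteq> r1"
      proof
        fix F assume F: "F \<in> query_val \<theta> q"
        then obtain a where a: "a \<in> q" "F = atom_val \<theta> a" unfolding query_val_def by auto
        show "F \<in> r1"
        proof (rule ccontr)
          assume "F \<notin> r1"
          then have Fr0: "F \<in> r0" using th F by auto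
          have fstF: "fst F = fst a" using a unfolding atom_val_def by simp
          have "atom_of q F = a"
            unfolding atom_of_def
          proof (rule the_equality)
            show "a \<in> q \<and> fst a = fst F" using a fstF by simp
            fix b assume "b \<in> q \<and> fst b = fst F"
            then show "b = a" using uniq a fstF by metis
          qed
          then have "a \<in> q0" using q0g Fr0 r0g by auto
          then have "F \<in> query_val \<theta> q0" using a unfolding query_val_def by auto
          then show False using dis Fr0 by auto
        qed
      qed
      then show "satisfies r1 q" unfolding satisfies_def by blast
    qed
  next
    assume H: "\<forall>r. is_repair sig (db - gs) r \<longrightarrow> satisfies r q"
    show "\<forall>r. is_repair sig db r \<longrightarrow> satisfies r q"
    proof (intro allI impI)
      fix r assume r: "is_repair sig db r"
      have "satisfies (r \<inter> (db - gs)) q" using H restrict_repair[OF blk sub r] by blast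
      then show "satisfies r q" unfolding satisfies_def by blast
    qed
  qed
qed

end
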